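(* Let $k\ge 2$, $n\ge 1$, $x=\zeta_k$, and let $H\in\mathrm{BH}(kn+k,k)$ have the block form \[H=\begin{pmatrix} S & F_k\otimes j_n\\ F_k^{\ast}\otimes j_n^{\top} & A\end{pmatrix},\] where $S$ is a circulant matrix in $\mathrm{BH}(k,k)$ and $A$ is a $kn\times kn$ matrix. Let $R_1$ and $C_1$ be the sets of the first $k$ rows and first $k$ columns of $H$, respectively, and for some $0\le m\le k-1$ let $R_2$ and $C_2$ be the sets of the $n$ consecutive rows, respectively columns, of $H$ with indices $k+mn+1,\dots,k+mn+n$. Let $\omega\in\langle x\rangle\setminus\{1\}$. Then the matrix obtained from $H$ by multiplying every entry of the submatrix with rows $R_1$ and columns $C_2$ by $\omega$, and simultaneously every entry of the submatrix with rows $R_2$ and columns $C_1$ by $\overline{\omega}$ (all other entries unchanged), is again in $\mathrm{BH}(kn+k,k)$.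
   Context: $\zeta_k=e^{2\pi\sqrt{-1}/k}$ and $\langle\zeta_k\rangle$ is the group of $k$-th roots of unity. A complex Hadamard matrix of order $N$ is an $N\times N$ matrix with entries of modulus $1$ and $HH^{\ast}=NI_N$. $\mathrm{BH}(N,k)$ is the set of $N\times N$ complex Hadamard matrices with all entries in $\langle\zeta_k\rangle$. A circulant matrix $\mathrm{circ}(s_0,\dots,s_{k-1})$ has $(i,j)$ entry $s_{(j-i)\bmod k}$ ($0\le i,j\le k-1$). $F_k=[x^{(i-1)(j-1)}]_{1\le i,j\le k}$, $j_n$ is the all-ones row vector of length $n$, and $\otimes$ is the Kronecker product $A\otimes B=[a_{ij}B]$. *)

theory Defs
  imports Complex_Main
begin

text \<open>Square matrices of order N are represented as functions nat => nat => complex,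
  with 0-based indices i, j < N; entries outside this range are irrelevant.\<close>

definition zeta :: "nat \<Rightarrow> complex" where
  "zeta k = cis (2 * pi / real k)"

definition roots_grp :: "nat \<Rightarrow> complex set" where
  "roots_grp k = {zeta k ^ j | j. True}"

definition complex_hadamard :: "nat \<Rightarrow> (nat \<Rightarrow> nat \<Rightarrow> complex) \<Rightarrow> bool" where
  "complex_hadamard N H \<longleftrightarrow>
     (\<forall>i<N. \<forall>j<N. cmod (H i j) = 1) \<and>
     (\<forall>i<N. \<forall>l<N. (\<Sum>j<N. H i j * cnj (H l j)) = (if i = l then of_nat N else 0))"

definition BH :: "nat \<Rightarrow> nat \<Rightarrow> (nat \<Rightarrow> nat \<Rightarrow> complex) \<Rightarrow> bool" where
  "BH N k H \<longleftrightarrow> complex_hadamard N H \<and> (\<forall>i<N. \<forall>j<N. H i j \<in> roots_grp k)"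

definition circ :: "nat \<Rightarrow> (nat \<Rightarrow> complex) \<Rightarrow> nat \<Rightarrow> nat \<Rightarrow> complex" where
  "circ k s = (\<lambda>i j. s (nat ((int j - int i) mod int k)))"

end

theory Submission
  imports Defs
begin

lemma zeta_pow: "zeta k ^ p = cis (2 * pi * real p / real k)"
  unfolding zeta_def DeMoivre by (simp add: field_simps)

lemma zeta_pow_k: "k > 0 \<Longrightarrow> zeta k ^ k = 1"
  unfolding zeta_pow by simp

lemma cmod_zeta_pow[simp]: "cmod (zeta k ^ p) = 1"
  unfolding zeta_pow by simp

lemma zeta_pow_ne1:
  assumes "0 < p" "p < k" shows "zeta k ^ p \<noteq> 1"
proof
  assume "zeta k ^ p = 1"
  hence "cos (2 * pi * real p / real k) = 1"
    unfolding zeta_pow by (metis Re_complex_of_real cis.sel(1) one_complex.sel(1))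
  then obtain j :: int where j: "2 * pi * real p / real k = real_of_int j * 2 * pi"
    unfolding cos_one_2pi_int by blast
  have "real p = real_of_int j * real k" using j assms
    by (simp add: field_simps)
  hence "int p = j * int k" by (metis of_int_eq_iff of_int_mult of_int_of_nat_eq)
  moreover have "int p > 0" "int p < int k" using assms by auto
  ultimately show False
  proof (cases "j \<le> 0")
    case True
    have "j * int k \<le> 0" by (rule mult_nonpos_nonneg) (use True in simp_all)
    thus False using \<open>int p = j * int k\<close> \<open>int p > 0\<close> by simp
  next
    case False
    hence "j * int k \<ge> 1 * int k" by (intro mult_right_mono) auto
    thus False using \<open>int p = j * int k\<close> \<open>int p < int k\<close> by linarith
  qed
qed

lemma zeta_pow_mod: "k > 0 \<Longrightarrow> zeta k ^ p = zeta k ^ (p mod k)"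
proof -
  assume k: "k > 0"
  have "zeta k ^ p = (zeta k ^ k) ^ (p div k) * zeta k ^ (p mod k)"
    by (metis power_add power_mult div_mult_mod_eq mult.commute)
  thus ?thesis using zeta_pow_k[OF k] by simp
qed

lemma zeta_cnj: "zeta k ^ p * cnj (zeta k ^ p) = 1"
  by (metis complex_norm_square cmod_zeta_pow of_real_1 power_one)

lemma orth:
  assumes k: "k > 0" and "p < k" "q < k"
  shows "(\<Sum>i<k. zeta k ^ (i * q) * cnj (zeta k ^ (i * p))) = (if p = q then of_nat k else 0)"
proof (cases "p = q")
  case True
  have "zeta k ^ (i * q) * cnj (zeta k ^ (i * q)) = 1" for i
    by (rule zeta_cnj)
  thus ?thesis using True by simp
next
  case False
  define r where "r = zeta k ^ ((q + k - p) mod k)"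
  have r1: "r \<noteq> 1" unfolding r_def
  proof (rule zeta_pow_ne1)
    show "(q + k - p) mod k < k" using k by simp
    show "0 < (q + k - p) mod k"
    proof (cases "p < q")
      case True
      have e: "q + k - p = (q - p) + k" using True by simp
      have "((q - p) + k) mod k = q - p" using assms by simp
      hence "(q + k - p) mod k = q - p" by (simp only: e)
      thus ?thesis using True by simp
    next
      case c: False
      have "q < p" using c \<open>p \<noteq> q\<close> by simp
      hence "q + k - p < k" "0 < q + k - p" using assms by auto
      thus ?thesis by simp
    qed
  qed
  have "r ^ k = (zeta k ^ k) ^ ((q + k - p) mod k)" unfolding r_def
    by (simp add: power_mult[symmetric] mult.commute)
  hence rk: "r ^ k = 1" using zeta_pow_k[OF k] by simp
  have "zeta k ^ (i * q) * cnj (zeta k ^ (i * p)) = r ^ i" for i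
  proof -
    have "zeta k ^ (i * q) * cnj (zeta k ^ (i * p)) * zeta k ^ (i*p) = zeta k ^ (i * q)"
      using zeta_cnj[of k "i*p"] by (simp add: field_simps)
    moreover have "r^i * zeta k ^ (i*p) = zeta k ^ (i * q)"
    proof -
      have "r^i * zeta k ^ (i*p) = zeta k ^ (((q + k - p) mod k) * i + i * p)"
        unfolding r_def by (simp add: power_mult power_add)
      also have "\<dots> = zeta k ^ ((((q + k - p) mod k) * i + i * p) mod k)"
        by (rule zeta_pow_mod[OF k])
      also have "(((q + k - p) mod k) * i + i * p) mod k = ((q + k - p) * i + i * p) mod k"
        by (metis mod_add_left_eq mod_mult_left_eq)
      also have "(q + k - p) * i + i * p = i * q + i * k"
      proof -
        have "q + k - p + p = q + k" using assms by simp
        hence "(q + k - p) * i + p * i = (q + k) * i" by (metis add_mult_distrib)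
        thus ?thesis by (simp add: algebra_simps)
      qed
      also have "(i * q + i * k) mod k = (i * q) mod k" by simp
      also have "zeta k ^ ((i * q) mod k) = zeta k ^ (i * q)" using zeta_pow_mod[OF k, of "i*q"] by simp
      finally show ?thesis .
    qed
    moreover have nz: "zeta k ^ (i*p) \<noteq> 0" using cmod_zeta_pow[of k "i*p"] by (metis norm_zero zero_neq_one)
    ultimately have "zeta k ^ (i * q) * cnj (zeta k ^ (i * p)) * zeta k ^ (i*p) = r^i * zeta k ^ (i*p)" by simp
    thus ?thesis by (rule mult_right_cancel[OF nz, THEN iffD1])
  qed
  hence "(\<Sum>i<k. zeta k ^ (i * q) * cnj (zeta k ^ (i * p))) = (\<Sum>i<k. r^i)" by simp
  also have "\<dots> = 0" using r1 rk by (simp add: sum_gp_strict)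
  finally show ?thesis using False by simp
qed

lemma split_sum:
  fixes k n :: nat
  shows "(\<Sum>j<k*n+k. f j) = (\<Sum>j<k. f j) + (\<Sum>c<k. \<Sum>b<n. f (k + c*n + b))"
proof -
  have e: "{..<k*n+k} = {..<k} \<union> {k..<k+k*n}" by auto
  have "sum f ({..<k} \<union> {k..<k+k*n}) = (\<Sum>j<k. f j) + (\<Sum>j\<in>{k..<k+k*n}. f j)"
    by (rule sum.union_disjoint) auto
  hence "(\<Sum>j<k*n+k. f j) = (\<Sum>j<k. f j) + (\<Sum>j\<in>{k..<k+k*n}. f j)"
    by (simp only: e)
  also have "(\<Sum>j\<in>{k..<k+k*n}. f j) = (\<Sum>j\<in>{0+k..<k*n+k}. f j)" by (simp add: add.commute)
  also have "\<dots> = (\<Sum>j\<in>{0..<k*n}. f (j+k))" by (rule sum.shift_bounds_nat_ivl)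
  also have "\<dots> = (\<Sum>j<k*n. f (k+j))" by (simp add: lessThan_atLeast0 add.commute)
  also have "\<dots> = (\<Sum>c<k. \<Sum>j\<in>{c*n..<c*n+n}. f (k+j))"
    by (simp add: sum.nat_group)
  also have "\<dots> = (\<Sum>c<k. \<Sum>b<n. f (k + c*n + b))"
  proof (rule sum.cong, simp)
    fix c
    have "(\<Sum>j\<in>{c*n..<c*n+n}. f (k+j)) = (\<Sum>j\<in>{0+c*n..<n+c*n}. f (k+j))" by (simp add: add.commute)
    also have "\<dots> = (\<Sum>j\<in>{0..<n}. f (k+(j+c*n)))" by (rule sum.shift_bounds_nat_ivl)
    also have "\<dots> = (\<Sum>b<n. f (k + c*n + b))" by (simp add: lessThan_atLeast0 algebra_simps)
    finally show "(\<Sum>j\<in>{c*n..<c*n+n}. f (k+j)) = (\<Sum>b<n. f (k + c*n + b))" .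
  qed
  finally show ?thesis .
qed


lemma reindex_circ:
  fixes k i a :: nat and s :: "nat \<Rightarrow> complex"
  assumes k: "k > 0" and i: "i < k"
  shows "(\<Sum>j<k. cnj (zeta k ^ (j * a)) * cnj (circ k s i j))
       = cnj (zeta k ^ (i * a)) * (\<Sum>t<k. cnj (zeta k ^ (t * a)) * cnj (s t))"
proof -
  define h where "h t = (t + i) mod k" for t
  define g where "g j = nat ((int j - int i) mod int k)" for j
  have hk: "h t < k" for t unfolding h_def using k by simp
  have gk: "g j < k" for j unfolding g_def using k
    by (simp add: nat_less_iff)
  have gh: "g (h t) = t" if "t < k" for t
  proof -
    have "int (h t) = (int t + int i) mod int k" unfolding h_def by (simp add: zmod_int)
    hence "(int (h t) - int i) mod int k = (int t + int i - int i) mod int k"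
      by (simp add: mod_diff_left_eq)
    also have "\<dots> = int t" using that by simp
    finally show ?thesis unfolding g_def by simp
  qed
  have hg: "h (g j) = j" if "j < k" for j
  proof -
    have "int (g j) = (int j - int i) mod int k" unfolding g_def using k by simp
    hence "int (h (g j)) = ((int j - int i) mod int k + int i) mod int k"
      unfolding h_def by (simp add: zmod_int)
    also have "\<dots> = (int j - int i + int i) mod int k" by (simp add: mod_add_left_eq)
    also have "\<dots> = int j" using that by simp
    finally show ?thesis by simp
  qed
  have bij: "bij_betw h {..<k} {..<k}"
    by (rule bij_betw_byWitness[where f'=g]) (auto simp: gh hg hk gk)
  define G where "G j = cnj (zeta k ^ (j * a)) * cnj (circ k s i j)" for j
  have "(\<Sum>j<k. G j) = (\<Sum>t<k. G (h t))"
    using sum.reindex_bij_betw[OF bij, of G] by simp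
  also have "\<dots> = (\<Sum>t<k. cnj (zeta k ^ (i * a)) * (cnj (zeta k ^ (t * a)) * cnj (s t)))"
  proof (rule sum.cong, simp)
    fix t assume "t \<in> {..<k}"
    hence t: "t < k" by simp
    have c: "circ k s i (h t) = s t" using gh[OF t] unfolding circ_def g_def by simp
    have "zeta k ^ (h t * a) = zeta k ^ ((h t * a) mod k)" by (rule zeta_pow_mod[OF k])
    also have "(h t * a) mod k = ((t + i) * a) mod k" unfolding h_def by (simp add: mod_mult_left_eq)
    also have "zeta k ^ (((t + i) * a) mod k) = zeta k ^ ((t + i) * a)" using zeta_pow_mod[OF k, of "(t + i) * a"] by simp
    also have "\<dots> = zeta k ^ (i * a) * zeta k ^ (t * a)" by (simp add: algebra_simps power_add)
    finally show "G (h t) = cnj (zeta k ^ (i * a)) * (cnj (zeta k ^ (t * a)) * cnj (s t))"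
      unfolding G_def c by simp
  qed
  finally show ?thesis unfolding G_def by (simp add: sum_distrib_left)
qed


lemma key:
  fixes k n a b0 c :: nat and H :: "nat \<Rightarrow> nat \<Rightarrow> complex" and s :: "nat \<Rightarrow> complex"
  assumes k: "k > 0"
    and orthH: "\<forall>i<k*n+k. \<forall>l<k*n+k. (\<Sum>j<k*n+k. H i j * cnj (H l j)) = (if i = l then of_nat (k*n+k) else 0)"
    and S_circ: "\<forall>i<k. \<forall>j<k. H i j = circ k s i j"
    and top_right: "\<forall>i<k. \<forall>a<k. \<forall>b<n. H i (k + a * n + b) = zeta k ^ (i * a)"
    and bottom_left: "\<forall>a<k. \<forall>b<n. \<forall>j<k. H (k + a * n + b) j = cnj (zeta k ^ (j * a))"
    and a: "a < k" and b0: "b0 < n" and c: "c < k" and ca: "c \<noteq> a"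
  shows "(\<Sum>b<n. H (k + a*n + b0) (k + c*n + b)) = 0"
proof -
  define l where "l = k + a*n + b0"
  define T where "T c' = (\<Sum>b<n. H l (k + c'*n + b))" for c'
  define K where "K = (\<Sum>t<k. cnj (zeta k ^ (t * a)) * cnj (s t))"
  have lN: "l < k*n+k"
  proof -
    have "a*n + b0 < a*n + n" using b0 by simp
    also have "\<dots> = (a+1)*n" by simp
    also have "\<dots> \<le> k*n" using a by (intro mult_right_mono) auto
    finally show ?thesis unfolding l_def by simp
  qed
  have eq: "(\<Sum>c'<k. cnj (zeta k ^ (i * c')) * T c') = - (cnj (zeta k ^ (i * a)) * K)" if i: "i < k" for i
  proof -
    have "i \<noteq> l" "i < k*n+k" using i unfolding l_def by auto
    hence "0 = (\<Sum>j<k*n+k. H l j * cnj (H i j))" using orthH lN by auto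
    also have "\<dots> = (\<Sum>j<k. H l j * cnj (H i j)) + (\<Sum>c'<k. \<Sum>b<n. H l (k + c'*n + b) * cnj (H i (k + c'*n + b)))"
      by (rule split_sum)
    also have "(\<Sum>j<k. H l j * cnj (H i j)) = (\<Sum>j<k. cnj (zeta k ^ (j * a)) * cnj (circ k s i j))"
      using S_circ bottom_left a b0 i unfolding l_def by simp
    also have "\<dots> = cnj (zeta k ^ (i * a)) * K" unfolding K_def by (rule reindex_circ[OF k i])
    also have "(\<Sum>c'<k. \<Sum>b<n. H l (k + c'*n + b) * cnj (H i (k + c'*n + b)))
             = (\<Sum>c'<k. cnj (zeta k ^ (i * c')) * T c')"
      unfolding T_def using top_right i by (simp add: sum_distrib_left mult.commute)
    finally show ?thesis by (simp add: eq_neg_iff_add_eq_0 add.commute)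
  qed
  have "(\<Sum>i<k. zeta k ^ (i * c) * (\<Sum>c'<k. cnj (zeta k ^ (i * c')) * T c'))
      = (\<Sum>c'<k. T c' * (\<Sum>i<k. zeta k ^ (i * c) * cnj (zeta k ^ (i * c'))))"
  proof -
    have "(\<Sum>i<k. zeta k ^ (i * c) * (\<Sum>c'<k. cnj (zeta k ^ (i * c')) * T c'))
        = (\<Sum>i<k. \<Sum>c'<k. zeta k ^ (i * c) * (cnj (zeta k ^ (i * c')) * T c'))"
      by (simp add: sum_distrib_left)
    also have "\<dots> = (\<Sum>c'<k. \<Sum>i<k. zeta k ^ (i * c) * (cnj (zeta k ^ (i * c')) * T c'))"
      by (rule sum.swap)
    also have "\<dots> = (\<Sum>c'<k. T c' * (\<Sum>i<k. zeta k ^ (i * c) * cnj (zeta k ^ (i * c'))))"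
      by (simp add: sum_distrib_left mult_ac)
    finally show ?thesis .
  qed
  also have "\<dots> = (\<Sum>c'<k. T c' * (if c' = c then of_nat k else 0))"
    by (rule sum.cong, simp) (use orth[OF k _ c] in simp)
  also have "\<dots> = (\<Sum>c'<k. if c' = c then T c * of_nat k else 0)"
    by (rule sum.cong) auto
  also have "\<dots> = T c * of_nat k" using c by simp
  finally have 1: "(\<Sum>i<k. zeta k ^ (i * c) * (\<Sum>c'<k. cnj (zeta k ^ (i * c')) * T c')) = T c * of_nat k" .
  have "(\<Sum>i<k. zeta k ^ (i * c) * (\<Sum>c'<k. cnj (zeta k ^ (i * c')) * T c'))
      = (\<Sum>i<k. zeta k ^ (i * c) * (- (cnj (zeta k ^ (i * a)) * K)))"
  proof (rule sum.cong[OF refl])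
    fix i assume "i \<in> {..<k}"
    hence "i < k" by simp
    show "zeta k ^ (i * c) * (\<Sum>c'<k. cnj (zeta k ^ (i * c')) * T c') = zeta k ^ (i * c) * (- (cnj (zeta k ^ (i * a)) * K))"
      by (simp only: eq[OF \<open>i < k\<close>])
  qed
  also have "\<dots> = - K * (\<Sum>i<k. zeta k ^ (i * c) * cnj (zeta k ^ (i * a)))"
    by (simp add: sum_distrib_left algebra_simps)
  also have "\<dots> = 0" using orth[OF k a c] ca by simp
  finally have "T c * of_nat k = 0" using 1 by simp
  hence "T c = 0" using k by simp
  thus ?thesis unfolding T_def l_def .
qed


lemma blk:
  fixes b c m n :: nat
  assumes "b < n"
  shows "(m*n \<le> c*n+b \<and> c*n+b < m*n+n) \<longleftrightarrow> c = m"
proof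
  assume h: "m*n \<le> c*n+b \<and> c*n+b < m*n+n"
  show "c = m"
  proof (rule ccontr)
    assume "c \<noteq> m"
    hence "c < m \<or> m < c" by auto
    thus False
    proof
      assume "c < m"
      hence "Suc c * n \<le> m * n" by (intro mult_right_mono) auto
      thus False using h assms by simp
    next
      assume "m < c"
      hence "Suc m * n \<le> c * n" by (intro mult_right_mono) auto
      thus False using h assms by simp
    qed
  qed
qed (use assms in auto)

lemma rowcases:
  fixes i k n :: nat
  assumes "i < k*n+k" "k \<le> i" "n > 0"
  obtains a b where "a < k" "b < n" "i = k + a*n + b"
proof -
  define a where "a = (i - k) div n"
  define b where "b = (i - k) mod n"
  have "i - k < k * n" using assms by simp
  hence "a < k" unfolding a_def by (rule less_mult_imp_div_less)
  moreover have "b < n" unfolding b_def using assms by simp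
  moreover have "i = k + a*n + b" unfolding a_def b_def using assms
    by (metis add.assoc div_mult_mod_eq le_add_diff_inverse)
  ultimately show ?thesis using that by blast
qed

lemma roots_mult: "x \<in> roots_grp k \<Longrightarrow> y \<in> roots_grp k \<Longrightarrow> x * y \<in> roots_grp k"
  unfolding roots_grp_def by (auto simp: power_add[symmetric])

lemma roots_cnj:
  assumes k: "k > 0" and x: "x \<in> roots_grp k" shows "cnj x \<in> roots_grp k"
proof -
  obtain p where p: "x = zeta k ^ p" using x unfolding roots_grp_def by auto
  have "zeta k ^ p * zeta k ^ (p * (k - 1)) = zeta k ^ (p * k)"
    using k by (simp add: power_add[symmetric] algebra_simps)
  also have "\<dots> = 1" using zeta_pow_k[OF k] by (simp add: power_mult mult.commute)
  finally have "zeta k ^ p * zeta k ^ (p * (k - 1)) = zeta k ^ p * cnj (zeta k ^ p)"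
    using zeta_cnj by simp
  moreover have "zeta k ^ p \<noteq> 0" using cmod_zeta_pow[of k p] by (metis norm_zero zero_neq_one)
  ultimately have "cnj (zeta k ^ p) = zeta k ^ (p * (k - 1))" by (metis mult_left_cancel)
  thus ?thesis unfolding p roots_grp_def by auto
qed

lemma roots_cmod: "x \<in> roots_grp k \<Longrightarrow> cmod x = 1"
  unfolding roots_grp_def by auto


theorem corollary5p4:
  fixes k n m :: nat and H :: "nat \<Rightarrow> nat \<Rightarrow> complex" and s :: "nat \<Rightarrow> complex"
    and \<omega> :: complex
  assumes k2: "k \<ge> 2" and n1: "n \<ge> 1"
    and HBH: "BH (k * n + k) k H"
    and S_circ: "\<forall>i<k. \<forall>j<k. H i j = circ k s i j"
    and S_BH: "BH k k (circ k s)"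
    and top_right: "\<forall>i<k. \<forall>a<k. \<forall>b<n. H i (k + a * n + b) = zeta k ^ (i * a)"
    and bottom_left: "\<forall>a<k. \<forall>b<n. \<forall>j<k. H (k + a * n + b) j = cnj (zeta k ^ (j * a))"
    and m_lt: "m < k"
    and \<omega>_in: "\<omega> \<in> roots_grp k - {1}"
  shows "BH (k * n + k) k
           (\<lambda>i j. if i < k \<and> k + m * n \<le> j \<and> j < k + m * n + n then \<omega> * H i j
                  else if k + m * n \<le> i \<and> i < k + m * n + n \<and> j < k then cnj \<omega> * H i j
                  else H i j)"
proof -
  define N where "N = k * n + k"
  define H' where "H' = (\<lambda>i j. if i < k \<and> k + m * n \<le> j \<and> j < k + m * n + n then \<omega> * H i j
                  else if k + m * n \<le> i \<and> i < k + m * n + n \<and> j < k then cnj \<omega> * H i j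
                  else H i j)"
  have k0: "k > 0" using k2 by simp
  have n0: "n > 0" using n1 by simp
  have unimod: "\<forall>i<N. \<forall>j<N. cmod (H i j) = 1"
    and orthH: "\<forall>i<N. \<forall>l<N. (\<Sum>j<N. H i j * cnj (H l j)) = (if i = l then of_nat N else 0)"
    and rootsH: "\<forall>i<N. \<forall>j<N. H i j \<in> roots_grp k"
    using HBH unfolding BH_def complex_hadamard_def N_def by auto
  have wr: "\<omega> \<in> roots_grp k" using \<omega>_in by simp
  have wc: "cmod \<omega> = 1" using roots_cmod[OF wr] .
  have wcr: "cnj \<omega> \<in> roots_grp k" using roots_cnj[OF k0 wr] .
  have ww: "\<omega> * cnj \<omega> = 1"
    using wc by (metis complex_norm_square of_real_1 power_one)
  have ww2: "cnj \<omega> * \<omega> = 1" using ww by (simp add: mult.commute)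
  define fc1 where "fc1 i = (if k + m * n \<le> i \<and> i < k + m * n + n then cnj \<omega> else 1)" for i
  define fc2 where "fc2 i = (if i < k then \<omega> else 1)" for i
  have H'1: "H' i j = fc1 i * H i j" if "j < k" for i j
    using that unfolding H'_def fc1_def by auto
  have H'2: "H' i (k + m*n + b) = fc2 i * H i (k + m*n + b)" if "b < n" for i b
    using that unfolding H'_def fc2_def by auto
  have H'3: "H' i (k + c*n + b) = H i (k + c*n + b)" if "b < n" "c \<noteq> m" for i b c
  proof -
    have "\<not> (k + m * n \<le> k + c*n + b \<and> k + c*n + b < k + m * n + n)"
      using blk[OF that(1), of m c] that(2) by simp
    thus ?thesis unfolding H'_def by auto
  qed
  have R2iff: "(k + m * n \<le> k + a*n + b \<and> k + a*n + b < k + m * n + n) \<longleftrightarrow> a = m" if "b < n" for a b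
    using blk[OF that, of m a] by simp
  have orthN: "\<forall>i<k*n+k. \<forall>l<k*n+k. (\<Sum>j<k*n+k. H i j * cnj (H l j)) = (if i = l then of_nat (k*n+k) else 0)"
    using orthH unfolding N_def .
  have A: "(\<Sum>b<n. H (k+a*n+b0) (k+c*n+b) * cnj (H l (k+c*n+b))) = 0"
    if "a<k" "b0<n" "c<k" "c\<noteq>a" "l<k" for a b0 c l
  proof -
    have "(\<Sum>b<n. H (k+a*n+b0) (k+c*n+b) * cnj (H l (k+c*n+b)))
        = (\<Sum>b<n. H (k+a*n+b0) (k+c*n+b)) * cnj (zeta k ^ (l*c))"
      using top_right that by (simp add: sum_distrib_right)
    also have "\<dots> = 0" using key[OF k0 orthN S_circ top_right bottom_left that(1-4)] by simp
    finally show ?thesis .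
  qed
  have A': "(\<Sum>b<n. H l (k+c*n+b) * cnj (H (k+a*n+b0) (k+c*n+b))) = 0"
    if "a<k" "b0<n" "c<k" "c\<noteq>a" "l<k" for a b0 c l
  proof -
    have "(\<Sum>b<n. H l (k+c*n+b) * cnj (H (k+a*n+b0) (k+c*n+b)))
        = zeta k ^ (l*c) * cnj (\<Sum>b<n. H (k+a*n+b0) (k+c*n+b))"
      using top_right that by (simp add: sum_distrib_left cnj_sum)
    also have "\<dots> = 0" using key[OF k0 orthN S_circ top_right bottom_left that(1-4)] by simp
    finally show ?thesis .
  qed
  have B: "(\<Sum>j<k. H (k+a*n+b) j * cnj (H (k+a'*n+b') j)) = 0"
    if "a<k" "a'<k" "a\<noteq>a'" "b<n" "b'<n" for a a' b b'
  proof -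
    have "(\<Sum>j<k. H (k+a*n+b) j * cnj (H (k+a'*n+b') j))
        = (\<Sum>j<k. zeta k ^ (j * a') * cnj (zeta k ^ (j*a)))"
      using bottom_left that by (simp add: mult.commute)
    also have "\<dots> = 0" using orth[OF k0 that(1,2)] that(3) by simp
    finally show ?thesis .
  qed
  have main: "(\<Sum>j<N. H' i j * cnj (H' l j)) = (if i = l then of_nat N else 0)"
    if i: "i < N" and l: "l < N" for i l
  proof -
    define P1 where "P1 = (\<Sum>j<k. H i j * cnj (H l j))"
    define P2 where "P2 = (\<Sum>b<n. H i (k+m*n+b) * cnj (H l (k+m*n+b)))"
    define P3 where "P3 = (\<Sum>c\<in>{..<k}-{m}. \<Sum>b<n. H i (k+c*n+b) * cnj (H l (k+c*n+b)))"
    have split: "(\<Sum>j<N. G j) = (\<Sum>j<k. G j) + (\<Sum>b<n. G (k+m*n+b))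
        + (\<Sum>c\<in>{..<k}-{m}. \<Sum>b<n. G (k+c*n+b))" for G
    proof -
      have "(\<Sum>j<N. G j) = (\<Sum>j<k. G j) + (\<Sum>c<k. \<Sum>b<n. G (k+c*n+b))"
        unfolding N_def by (rule split_sum)
      also have "(\<Sum>c<k. \<Sum>b<n. G (k+c*n+b)) = (\<Sum>b<n. G (k+m*n+b))
          + (\<Sum>c\<in>{..<k}-{m}. \<Sum>b<n. G (k+c*n+b))"
        using m_lt by (subst sum.remove[of _ m]) auto
      finally show ?thesis by (simp add: add.assoc)
    qed
    have old: "P1 + P2 + P3 = (if i = l then of_nat N else 0)"
      using split[of "\<lambda>j. H i j * cnj (H l j)"] orthH i l unfolding P1_def P2_def P3_def by simp
    have new: "(\<Sum>j<N. H' i j * cnj (H' l j)) = fc1 i * cnj (fc1 l) * P1 + fc2 i * cnj (fc2 l) * P2 + P3"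
    proof -
      have "(\<Sum>j<k. H' i j * cnj (H' l j)) = fc1 i * cnj (fc1 l) * P1"
        unfolding P1_def by (simp add: H'1 sum_distrib_left algebra_simps)
      moreover have "(\<Sum>b<n. H' i (k+m*n+b) * cnj (H' l (k+m*n+b))) = fc2 i * cnj (fc2 l) * P2"
      proof -
        have "H' i (k+m*n+b) * cnj (H' l (k+m*n+b)) = fc2 i * cnj (fc2 l) * (H i (k+m*n+b) * cnj (H l (k+m*n+b)))"
          if "b < n" for b using H'2[OF that, of i] H'2[OF that, of l] by simp
        thus ?thesis unfolding P2_def sum_distrib_left by (intro sum.cong) auto
      qed
      moreover have "(\<Sum>c\<in>{..<k}-{m}. \<Sum>b<n. H' i (k+c*n+b) * cnj (H' l (k+c*n+b))) = P3"
        unfolding P3_def by (intro sum.cong) (auto simp: H'3)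
      ultimately show ?thesis using split[of "\<lambda>j. H' i j * cnj (H' l j)"] by simp
    qed
    have goal: "fc1 i * cnj (fc1 l) * P1 + fc2 i * cnj (fc2 l) * P2 + P3 = P1 + P2 + P3"
    proof (cases "i < k")
      case iT: True
      have f1i: "fc1 i = 1" "fc2 i = \<omega>" using iT unfolding fc1_def fc2_def by auto
      show ?thesis
      proof (cases "l < k")
        case True
        have "fc1 l = 1" "fc2 l = \<omega>" using True unfolding fc1_def fc2_def by auto
        thus ?thesis using f1i ww by simp
      next
        case False
        then obtain a b where ab: "a < k" "b < n" "l = k + a*n + b"
          using rowcases[of l k n] l n0 unfolding N_def by auto
        have f2l: "fc2 l = 1" using False unfolding fc2_def by simp
        show ?thesis
        proof (cases "a = m")
          case True
          have "fc1 l = cnj \<omega>" using R2iff[OF ab(2), of a] True ab(3) unfolding fc1_def by auto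
          moreover have "P3 = 0" unfolding P3_def ab(3)
            by (rule sum.neutral) (use A'[OF ab(1,2) _ _ iT] True in auto)
          moreover have "i \<noteq> l" using iT ab(3) by simp
          ultimately show ?thesis using old f1i f2l
            by (simp add: distrib_left[symmetric] mult.assoc)
        next
          case False
          have "fc1 l = 1" using R2iff[OF ab(2), of a] False ab(3) unfolding fc1_def by auto
          moreover have "P2 = 0" unfolding P2_def ab(3)
            by (rule A'[OF ab(1,2) m_lt _ iT]) (use False in simp)
          ultimately show ?thesis using f1i f2l by simp
        qed
      qed
    next
      case iF: False
      then obtain a b where ab: "a < k" "b < n" "i = k + a*n + b"
        using rowcases[of i k n] i n0 unfolding N_def by auto
      have f2i: "fc2 i = 1" using iF unfolding fc2_def by simp
      show ?thesis
      proof (cases "l < k")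
        case lT: True
        have f2l: "fc2 l = \<omega>" "fc1 l = 1" using lT unfolding fc1_def fc2_def by auto
        show ?thesis
        proof (cases "a = m")
          case True
          have "fc1 i = cnj \<omega>" using R2iff[OF ab(2), of a] True ab(3) unfolding fc1_def by auto
          moreover have "P3 = 0" unfolding P3_def ab(3)
            by (rule sum.neutral) (use A[OF ab(1,2) _ _ lT] True in auto)
          moreover have "i \<noteq> l" using lT ab(3) by simp
          ultimately show ?thesis using old f2i f2l
            by (simp add: distrib_left[symmetric] mult.assoc)
        next
          case False
          have "fc1 i = 1" using R2iff[OF ab(2), of a] False ab(3) unfolding fc1_def by auto
          moreover have "P2 = 0" unfolding P2_def ab(3)
            by (rule A[OF ab(1,2) m_lt _ lT]) (use False in simp)
          ultimately show ?thesis using f2i f2l by simp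
        qed
      next
        case lF: False
        then obtain a' b' where ab': "a' < k" "b' < n" "l = k + a'*n + b'"
          using rowcases[of l k n] l n0 unfolding N_def by auto
        have f2l: "fc2 l = 1" using lF unfolding fc2_def by simp
        have fi: "fc1 i = (if a = m then cnj \<omega> else 1)"
          using R2iff[OF ab(2), of a] ab(3) unfolding fc1_def by simp
        have fl: "fc1 l = (if a' = m then cnj \<omega> else 1)"
          using R2iff[OF ab'(2), of a'] ab'(3) unfolding fc1_def by simp
        show ?thesis
        proof (cases "a = a'")
          case True
          thus ?thesis using fi fl f2i f2l ww2 by simp
        next
          case False
          have "P1 = 0" unfolding P1_def ab(3) ab'(3) by (rule B[OF ab(1) ab'(1) False ab(2) ab'(2)])
          thus ?thesis using f2i f2l by simp
        qed
      qed
    qed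
    show ?thesis using new goal old by simp
  qed
  have "BH N k H'"
    unfolding BH_def complex_hadamard_def
  proof (intro conjI allI impI)
    fix i j assume "i < N" "j < N"
    thus "cmod (H' i j) = 1" using unimod wc unfolding H'_def by (auto simp: norm_mult)
  next
    fix i l assume "i < N" "l < N"
    thus "(\<Sum>j<N. H' i j * cnj (H' l j)) = (if i = l then of_nat N else 0)" by (rule main)
  next
    fix i j assume "i < N" "j < N"
    thus "H' i j \<in> roots_grp k" using rootsH wr wcr roots_mult unfolding H'_def by auto
  qed
  thus ?thesis unfolding N_def H'_def .
qed

end
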